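(* The schema $\langle[G\cup H]\rangle\varphi\rightarrow\langle[G]\rangle\langle[H]\rangle\varphi$ is not valid: with $A=\{a,b,c\}$, $G=\{a\}$, $H=\{b\}$, $P\supseteq\{p,q,r\}$ and $\varphi:=K_b(p\wedge q\wedge r)\wedge\neg K_a(p\wedge q\wedge r)\wedge\neg K_c(p\wedge q\wedge r)$, there is a pointed epistemic model $(M,w)$ with $(M,w)\models\langle[\{a,b\}]\rangle\varphi$ and $(M,w)\not\models\langle[\{a\}]\rangle\langle[\{b\}]\rangle\varphi$. (For instance, $W=\{pqr,pq\bar r,\bar pqr,p\bar qr\}$ with each state's name giving the truth values of $p,q,r$, $w=pqr$, $\sim_a$ identifying $pqr$ and $\bar pqr$, $\sim_b$ identifying $pqr$ and $p\bar qr$, $\sim_c$ identifying $pqr$, $pq\bar r$, $\bar pqr$, all relations reflexive otherwise.)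
   Context: Fix a finite set $A$ of agents and a countable set $P$ of propositional variables. The language $\mathcal{L}_{CoRGAL}$ is given by $\varphi ::= p \mid \neg\varphi \mid (\varphi\wedge\varphi) \mid K_a\varphi \mid [\varphi]\varphi \mid [G,\varphi]\varphi \mid [\langle G\rangle]\varphi$ with $p\in P$, $a\in A$, $G\subseteq A$. $\mathcal{L}_{EL}$ is the fragment built only from $p,\neg,\wedge,K_a$. Duals: $\langle\psi\rangle\varphi:=\neg[\psi]\neg\varphi$, $\langle[G]\rangle\varphi:=\neg[\langle G\rangle]\neg\varphi$. For $G\subseteq A$, $\mathcal{L}^G_{EL}$ is the set of formulas $\bigwedge_{i\in G}K_i\varphi_i$ with each $\varphi_i\in\mathcal{L}_{EL}$; $\psi_G,\chi_G$ range over $\mathcal{L}^G_{EL}$. Epistemic models $M=(W,\sim,V)$: $W\neq\emptyset$, each $\sim_a$ an equivalence relation, $V:P\to\mathcal{P}(W)$; $M^\varphi$ is the restriction of $M$ to $\{v:(M,v)\models\varphi\}$. Semantics: standard for $p,\neg,\wedge,K_a$; $(M,w)\models[\varphi]\psi$ iff $(M,w)\models\varphi$ implies $(M^\varphi,w)\models\psi$; $(M,w)\models[\langle G\rangle]\varphi$ iff for every $\psi_G$ there is $\chi_{A\setminus G}$ with $(M,w)\models\psi_G\to\langle\psi_G\wedge\chi_{A\setminus G}\rangle\varphi$. Thus $(M,w)\models\langle[G]\rangle\varphi$ iff there is $\psi_G$ such that for all $\chi_{A\setminus G}$, $(M,w)\models\psi_G\wedge[\psi_G\wedge\chi_{A\setminus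 G}]\varphi$. A formula is valid if true at every pointed model. *)

theory Defs
  imports Main
begin

(* Agents: A = {a,b,c}; propositional variables: P = nat (countable), p = 0, q = 1, r = 2 *)
datatype agent = Aa | Ab | Ac

datatype 'a fm =
    Atom nat
  | Neg "'a fm"
  | Conj "'a fm" "'a fm"
  | K 'a "'a fm"
  | Ann "'a fm" "'a fm"
  | Coal "'a set" "'a fm"

fun is_EL :: "'a fm \<Rightarrow> bool" where
  "is_EL (Atom p) = True"
| "is_EL (Neg f) = is_EL f"
| "is_EL (Conj f g) = (is_EL f \<and> is_EL g)"
| "is_EL (K a f) = is_EL f"
| "is_EL (Ann f g) = False"
| "is_EL (Coal G f) = False"

record ('a, 'w) model =
  W :: "'w set"
  R :: "'a \<Rightarrow> ('w \<times> 'w) set"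
  V :: "nat \<Rightarrow> 'w set"

definition is_model :: "('a, 'w) model \<Rightarrow> bool" where
  "is_model M \<longleftrightarrow> W M \<noteq> {} \<and> (\<forall>a. equiv (W M) (R M a)) \<and> (\<forall>p. V M p \<subseteq> W M)"

definition restrict :: "('a, 'w) model \<Rightarrow> 'w set \<Rightarrow> ('a, 'w) model" where
  "restrict M S = \<lparr> W = W M \<inter> S, R = (\<lambda>a. R M a \<inter> (S \<times> S)), V = (\<lambda>p. V M p \<inter> S) \<rparr>"

(* semantics of the epistemic fragment L_EL (only meaningful on is_EL formulas) *)
fun sat_el :: "('a, 'w) model \<Rightarrow> 'w \<Rightarrow> 'a fm \<Rightarrow> bool" where
  "sat_el M w (Atom p) = (w \<in> V M p)"
| "sat_el M w (Neg f) = (\<not> sat_el M w f)"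
| "sat_el M w (Conj f g) = (sat_el M w f \<and> sat_el M w g)"
| "sat_el M w (K a f) = (\<forall>v\<in>W M. (w, v) \<in> R M a \<longrightarrow> sat_el M v f)"
| "sat_el M w (Ann f g) = False"
| "sat_el M w (Coal G f) = False"

definition sat_KG :: "('a, 'w) model \<Rightarrow> 'w \<Rightarrow> 'a set \<Rightarrow> ('a \<Rightarrow> 'a fm) \<Rightarrow> bool" where
  "sat_KG M w G f \<longleftrightarrow> (\<forall>i\<in>G. sat_el M w (K i (f i)))"

fun sat :: "('a, 'w) model \<Rightarrow> 'w \<Rightarrow> 'a fm \<Rightarrow> bool" where
  "sat M w (Atom p) = (w \<in> V M p)"
| "sat M w (Neg f) = (\<not> sat M w f)"
| "sat M w (Conj f g) = (sat M w f \<and> sat M w g)"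
| "sat M w (K a f) = (\<forall>v\<in>W M. (w, v) \<in> R M a \<longrightarrow> sat M v f)"
| "sat M w (Ann f g) =
     (sat M w f \<longrightarrow> sat (restrict M {v \<in> W M. sat M v f}) w g)"
| "sat M w (Coal G f) =
     (\<forall>psi. (\<forall>i. is_EL (psi i)) \<longrightarrow>
        (\<exists>chi. (\<forall>i. is_EL (chi i)) \<and>
           (sat_KG M w G psi \<longrightarrow>
              (sat_KG M w G psi \<and> sat_KG M w (UNIV - G) chi \<and>
               sat (restrict M {v \<in> W M. sat_KG M v G psi \<and> sat_KG M v (UNIV - G) chi}) w f))))"

definition DCoal :: "'a set \<Rightarrow> 'a fm \<Rightarrow> 'a fm" where
  "DCoal G f = Neg (Coal G (Neg f))"

definition pqr :: "agent fm" where
  "pqr = Conj (Atom 0) (Conj (Atom 1) (Atom 2))"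

definition phi7 :: "agent fm" where
  "phi7 = Conj (K Ab pqr) (Conj (Neg (K Aa pqr)) (Neg (K Ac pqr)))"

end

theory Submission
  imports Defs
begin

definition Ra :: "(nat \<times> nat) set" where
  "Ra = {(0,0),(1,1),(2,2),(3,3),(0,2),(2,0)}"
definition Rb :: "(nat \<times> nat) set" where
  "Rb = {(0,0),(1,1),(2,2),(3,3),(0,3),(3,0)}"
definition Rc :: "(nat \<times> nat) set" where
  "Rc = {(0,0),(1,1),(2,2),(3,3),(0,1),(1,0),(0,2),(2,0),(1,2),(2,1)}"

definition M0 :: "(agent, nat) model" where
  "M0 = \<lparr> W = {0,1,2,3},
          R = (\<lambda>a. case a of Aa \<Rightarrow> Ra | Ab \<Rightarrow> Rb | Ac \<Rightarrow> Rc),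
          V = (\<lambda>p. if p = 0 then {0,1,3} else if p = 1 then {0,1,2} else if p = 2 then {0,2,3} else {}) \<rparr>"

lemma W0[simp]: "W M0 = {0,1,2,3}" by (simp add: M0_def)
lemma RA[simp]: "R M0 Aa = Ra" by (simp add: M0_def)
lemma RB[simp]: "R M0 Ab = Rb" by (simp add: M0_def)
lemma RC[simp]: "R M0 Ac = Rc" by (simp add: M0_def)
lemma V0[simp]: "V M0 0 = {0,1,3}" "V M0 (Suc 0) = {0,1,2}" "V M0 2 = {0,2,3}"
  by (simp_all add: M0_def)

lemma univ_agent: "(UNIV :: agent set) = {Aa, Ab, Ac}"
  using agent.exhaust by auto

lemma equiv_lemma: "equiv {0,1,2,3::nat} Ra" "equiv {0,1,2,3::nat} Rb" "equiv {0,1,2,3::nat} Rc"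
  unfolding equiv_def refl_on_def sym_def trans_def Ra_def Rb_def Rc_def by auto

lemma model0: "is_model M0"
  unfolding is_model_def
proof (intro conjI allI)
  show "W M0 \<noteq> {}" by simp
  fix a show "equiv (W M0) (R M0 a)" using equiv_lemma by (cases a) auto
next
  fix p show "V M0 p \<subseteq> W M0" by (simp add: M0_def)
qed

definition TOP :: "agent fm" where "TOP = Neg (Conj (Atom 0) (Neg (Atom 0)))"

lemma part1: "sat M0 0 (DCoal {Aa, Ab} phi7)"
proof -
  define psi where "psi = (\<lambda>i::agent. if i = Aa then Atom 1 else TOP)"
  have el: "\<forall>i. is_EL (psi i)" by (simp add: psi_def TOP_def)
  have kg0: "sat_KG M0 v {Aa,Ab} psi" if "v \<in> {0,2}" for v
    using that by (auto simp: sat_KG_def psi_def TOP_def Ra_def Rb_def)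
  have kg3: "\<not> sat_KG M0 3 {Aa,Ab} psi"
    by (auto simp: sat_KG_def psi_def TOP_def Ra_def)
  have comp: "UNIV - {Aa, Ab} = {Ac}" using univ_agent by auto
  have main: "sat (restrict M0 {v \<in> W M0. sat_KG M0 v {Aa,Ab} psi \<and> sat_KG M0 v (UNIV - {Aa,Ab}) chi}) 0 phi7"
    if "sat_KG M0 0 (UNIV - {Aa,Ab}) chi" for chi
  proof -
    have c: "sat_el M0 0 (K Ac (chi Ac))" using that comp by (simp add: sat_KG_def)
    have c2: "sat_el M0 2 (K Ac (chi Ac))" using c by (simp add: Rc_def)
    define S where "S = {v \<in> W M0. sat_KG M0 v {Aa,Ab} psi \<and> sat_KG M0 v (UNIV - {Aa,Ab}) chi}"
    have s0: "0 \<in> S" using kg0[of 0] c comp by (simp add: S_def sat_KG_def)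
    have s2: "2 \<in> S" using kg0[of 2] c2 comp by (simp add: S_def sat_KG_def)
    have s3: "3 \<notin> S" using kg3 by (simp add: S_def)
    have sW: "S \<subseteq> W M0" by (auto simp: S_def)
    show ?thesis unfolding S_def[symmetric]
      using s0 s2 s3 sW
      by (auto simp: phi7_def pqr_def restrict_def Ra_def Rb_def Rc_def)
  qed
  show ?thesis unfolding DCoal_def
    apply simp
    apply (rule exI[of _ psi])
    using el kg0 main by auto
qed

lemma part2: "\<not> sat M0 0 (DCoal {Aa} (DCoal {Ab} phi7))"
proof -
  define chi where "chi = (\<lambda>i::agent. if i = Ab then Conj (Atom 0) (Atom 2) else TOP)"
  have el: "\<forall>i. is_EL (chi i)" by (simp add: chi_def TOP_def)
  have comp: "UNIV - {Aa} = {Ab, Ac}" using univ_agent by auto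
  have kc0: "sat_KG M0 0 (UNIV - {Aa}) chi"
    using comp by (auto simp: sat_KG_def chi_def TOP_def Rb_def Rc_def)
  have kc2: "\<not> sat_KG M0 2 (UNIV - {Aa}) chi"
    using comp by (auto simp: sat_KG_def chi_def Rb_def)
  have main: "\<not> sat (restrict M0 {v \<in> W M0. sat_KG M0 v {Aa} psi \<and> sat_KG M0 v (UNIV - {Aa}) chi}) 0 (DCoal {Ab} phi7)"
    for psi
  proof -
    define S where "S = {v \<in> W M0. sat_KG M0 v {Aa} psi \<and> sat_KG M0 v (UNIV - {Aa}) chi}"
    have s2: "2 \<notin> S" using kc2 by (simp add: S_def)
    have sW: "S \<subseteq> W M0" by (auto simp: S_def)
    have ka: "sat (restrict (restrict M0 S) T) 0 (K Aa pqr)" for T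
      using s2 sW by (auto simp: pqr_def restrict_def Ra_def)
    have top: "sat_KG (restrict M0 S) 0 (UNIV - {Ab}) (\<lambda>_. TOP)"
      by (simp add: sat_KG_def TOP_def)
    have elt: "\<forall>i. is_EL ((\<lambda>_. TOP) i)" by (simp add: TOP_def)
    show ?thesis unfolding S_def[symmetric] DCoal_def
      using ka top elt by (auto simp: phi7_def)
  qed
  show ?thesis
    unfolding DCoal_def sat.simps(2) not_not
    apply (subst sat.simps(6))
    apply (intro allI impI)
    apply (rule_tac x=chi in exI)
    using el kc0 main unfolding DCoal_def sat.simps(2) not_not
    apply (intro conjI)
     apply assumption
    apply (intro impI conjI)
      apply assumption
     apply assumption
    apply assumption
    done

qed

theorem mainTheorem7:
  shows "\<exists>(M :: (agent, nat) model) w. is_model M \<and> w \<in> W M \<and>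
           sat M w (DCoal {Aa, Ab} phi7) \<and>
           \<not> sat M w (DCoal {Aa} (DCoal {Ab} phi7))"
  using model0 part1 part2 by (intro exI[of _ M0] exI[of _ 0]) auto

end
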